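(* Let $n\ge3$. Every optimal solution $V$ of the program $(\Gamma)$ associated to the game $CL(n)$ has rank at least $(4n-8)/3$.
   Context: Graph games: for a finite simple graph $\mathcal{G}$ with totally ordered vertex set and $e\ge1$ edges, the XOR game $A_{\mathcal{G}}$ has columns indexed by vertices and, for each edge $\{i,j\}$ with $i<j$, the two rows $(e_i-e_j)/(4e)$ and $(e_i+e_j)/(4e)$. $CL(n)$ is $A_{\mathcal{G}}$ where $\mathcal{G}$ has as vertices the nonempty subsets $S\subseteq\{1,\dots,n\}$ (in a fixed total order), with an edge between distinct $S,T$ iff $|S||T|-|S\cap T|$ is odd (equivalently $Y_SY_T=-Y_TY_S$ in the Clifford algebra generated by $Y_1,\dots,Y_n$ with $Y_i^2=1$, $Y_iY_j=-Y_jY_i$, $Y_S=Y_{i_1}\cdots Y_{i_k}$ for $S=\{i_1<\dots<i_k\}$). For a game with cost matrix $G$ with columns indexed by a set $J$, $(\Gamma)$ is the problem of maximizing $\sum_i\sqrt{\sum_{j,k}G_{ij}G_{ik}V_{jk}}$ over real positive semidefinite $J\times J$ matrices $V$ with all diagonal entries equal to $1$. *)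

theory Defs
  imports Complex_Main "Jordan_Normal_Form.DL_Rank"
begin

text \<open>Vertices of a graph with N vertices are identified with 0..<N; the total order on
  vertices is the order of the natural numbers.  E is the (symmetric, irreflexive)
  adjacency relation.\<close>

definition graph_edges :: "nat \<Rightarrow> (nat \<Rightarrow> nat \<Rightarrow> bool) \<Rightarrow> (nat \<times> nat) list" where
  "graph_edges N E = [(i, j). i \<leftarrow> [0..<N], j \<leftarrow> [0..<N], i < j \<and> E i j]"

definition graph_game :: "nat \<Rightarrow> (nat \<Rightarrow> nat \<Rightarrow> bool) \<Rightarrow> real mat" where
  "graph_game N E =
    (let es = graph_edges N E; e = real (length es) in
     mat_of_rows N (concat (map (\<lambda>(i, j).
        [vec N (\<lambda>k. ((if k = i then 1 else 0) - (if k = j then 1 else 0)) / (4 * e)),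
         vec N (\<lambda>k. ((if k = i then 1 else 0) + (if k = j then 1 else 0)) / (4 * e))]) es)))"

text \<open>CL(n): vertices are the nonempty subsets of {1..n}, listed (in the fixed total order)
  by the distinct list vs; S,T adjacent iff S ~= T and |S||T| - |S \<inter> T| is odd.\<close>
definition CL_adj :: "nat set list \<Rightarrow> nat \<Rightarrow> nat \<Rightarrow> bool" where
  "CL_adj vs i j \<longleftrightarrow> vs ! i \<noteq> vs ! j \<and>
     odd (int (card (vs ! i)) * int (card (vs ! j)) - int (card (vs ! i \<inter> vs ! j)))"

definition CL_game :: "nat set list \<Rightarrow> real mat" where
  "CL_game vs = graph_game (length vs) (CL_adj vs)"

definition psd_mat :: "real mat \<Rightarrow> bool" where
  "psd_mat V \<longleftrightarrow> V \<in> carrier_mat (dim_row V) (dim_row V) \<and> V\<^sup>T = V \<and>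
     (\<forall>x \<in> carrier_vec (dim_row V). x \<bullet> (V *\<^sub>v x) \<ge> 0)"

definition gamma_feasible :: "real mat \<Rightarrow> real mat \<Rightarrow> bool" where
  "gamma_feasible G V \<longleftrightarrow> V \<in> carrier_mat (dim_col G) (dim_col G) \<and> psd_mat V \<and>
     (\<forall>j < dim_col G. V $$ (j, j) = 1)"

definition gamma_obj :: "real mat \<Rightarrow> real mat \<Rightarrow> real" where
  "gamma_obj G V = (\<Sum>i < dim_row G. sqrt (\<Sum>j < dim_col G. \<Sum>k < dim_col G.
      G $$ (i, j) * G $$ (i, k) * V $$ (j, k)))"

definition gamma_optimal :: "real mat \<Rightarrow> real mat \<Rightarrow> bool" where
  "gamma_optimal G V \<longleftrightarrow> gamma_feasible G V \<and>
     (\<forall>W. gamma_feasible G W \<longrightarrow> gamma_obj G W \<le> gamma_obj G V)"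

definition mat_rank :: "real mat \<Rightarrow> nat" where
  "mat_rank V = vec_space.rank (dim_row V) V"

end

theory Submission
  imports Defs
begin



definition quadf :: "nat \<Rightarrow> (nat \<Rightarrow> nat \<Rightarrow> real) \<Rightarrow> (nat \<Rightarrow> real) \<Rightarrow> real" where
  "quadf N A x = (\<Sum>i<N. \<Sum>j<N. x i * A i j * x j)"

lemma sdm: "(i::nat) < N \<Longrightarrow> (\<Sum>j<N. (if j = i then 1 else 0) * f j) = (f i::real)"
  by (simp add: if_distrib[of "\<lambda>x. x * _"] cong: if_cong)
lemma sdm2: "(i::nat) < N \<Longrightarrow> (\<Sum>j<N. f j * (if j = i then 1 else 0)) = (f i::real)"
  by (simp add: if_distrib[of "\<lambda>x. _ * x"] cong: if_cong)

lemma quadf_delta: "i < N \<Longrightarrow> quadf N A (\<lambda>k. if k = i then 1 else 0) = A i i"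
  unfolding quadf_def by (simp add: sdm sdm2)

lemma quadf_cong: "(\<And>i. i < N \<Longrightarrow> x i = y i) \<Longrightarrow> quadf N A x = quadf N A y"
  unfolding quadf_def by (intro sum.cong refl) auto

lemma quadf_Suc:
  "quadf (Suc N) A x = quadf N A x + x N * (\<Sum>i<N. A N i * x i) + x N * (\<Sum>i<N. A i N * x i) + x N * A N N * x N"
  unfolding quadf_def by (simp add: sum.distrib sum_distrib_left algebra_simps)

lemma quadf_ext:
  "quadf (Suc N) A (\<lambda>k. if k < N then x k else t) =
   quadf N A x + t * (\<Sum>i<N. A N i * x i) + t * (\<Sum>i<N. A i N * x i) + t * A N N * t"
proof -
  have "quadf N A (\<lambda>k. if k < N then x k else t) = quadf N A x" by (rule quadf_cong) auto
  moreover have "(\<Sum>i<N. A N i * (if i < N then x i else t)) = (\<Sum>i<N. A N i * x i)"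
    by (rule sum.cong) auto
  moreover have "(\<Sum>i<N. A i N * (if i < N then x i else t)) = (\<Sum>i<N. A i N * x i)"
    by (rule sum.cong) auto
  ultimately show ?thesis by (simp add: quadf_Suc)
qed

lemma chol:
  assumes "\<forall>i<N. \<forall>j<N. A i j = A j i" "\<forall>x. quadf N A x \<ge> 0"
  shows "\<exists>U P. P \<subseteq> {..<N} \<and> (\<forall>i<N. \<forall>j<N. A i j = (\<Sum>a<N. U a i * U a j))
     \<and> (\<forall>a i. a \<notin> P \<longrightarrow> U a i = 0) \<and> (\<forall>a i. a < i \<longrightarrow> U a i = 0) \<and> (\<forall>a\<in>P. U a a \<noteq> 0)"
  using assms
proof (induction N arbitrary: A)
  case 0
  show ?case by (rule exI[of _ "\<lambda>_ _. 0"], rule exI[of _ "{}"]) auto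
next
  case (Suc N)
  note sym = Suc.prems(1) and psd = Suc.prems(2)
  define a0 where "a0 = A N N"
  have a0: "a0 \<ge> 0"
  proof -
    have "0 \<le> quadf (Suc N) A (\<lambda>k. if k < N then 0 else 1)" using psd by blast
    also have "\<dots> = a0" unfolding quadf_ext a0_def by (simp add: quadf_def)
    finally show ?thesis .
  qed
  show ?case
  proof (cases "a0 > 0")
    case True
    define s where "s = sqrt a0"
    have s: "s > 0" "s * s = a0" using True by (auto simp: s_def)
    define u where "u i = (if i \<le> N then A i N / s else 0)" for i
    define B where "B i j = A i j - u i * u j" for i j
    have symB: "\<forall>i<N. \<forall>j<N. B i j = B j i" using sym by (simp add: B_def mult.commute)
    have psdB: "\<forall>x. quadf N B x \<ge> 0"
    proof
      fix x
      define r where "r = (\<Sum>i<N. A N i * x i)"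
      have r2: "(\<Sum>i<N. A i N * x i) = r" unfolding r_def using sym
        by (intro sum.cong) auto
      have ux: "(\<Sum>i<N. u i * x i) = r / s" unfolding r_def u_def
        by (simp add: sum_divide_distrib) (intro sum.cong, use sym in auto)
      have "quadf N B x = quadf N A x - (\<Sum>i<N. u i * x i) * (\<Sum>j<N. u j * x j)"
        unfolding quadf_def B_def
        by (simp add: algebra_simps sum_subtractf sum_distrib_left sum_distrib_right)
      also have "\<dots> = quadf N A x - r * r / a0"
      proof -
        have "(\<Sum>i<N. u i * x i) * (\<Sum>j<N. u j * x j) = (r/s) * (r/s)" using ux by simp
        also have "\<dots> = r * r / a0" using s(2) by (metis times_divide_times_eq)
        finally show ?thesis by simp
      qed
      also have "\<dots> = quadf (Suc N) A (\<lambda>k. if k < N then x k else - r / a0)"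
      proof -
        have e: "A N N = a0" by (simp add: a0_def)
        have "(-r/a0)*r + (-r/a0)*r + (-r/a0)*a0*(-r/a0) = - (r*r/a0)" using True
          by (simp add: field_simps power2_eq_square)
        then show ?thesis unfolding quadf_ext r2 r_def[symmetric] e by simp
      qed
      finally show "quadf N B x \<ge> 0" using psd by simp
    qed
    obtain U' P' where H: "P' \<subseteq> {..<N} \<and> (\<forall>i<N. \<forall>j<N. B i j = (\<Sum>a<N. U' a i * U' a j))
     \<and> (\<forall>a i. a \<notin> P' \<longrightarrow> U' a i = 0) \<and> (\<forall>a i. a < i \<longrightarrow> U' a i = 0) \<and> (\<forall>a\<in>P'. U' a a \<noteq> 0)"
      using Suc.IH[OF symB psdB] by (elim exE) (rule that)
    have P': "P' \<subseteq> {..<N}" and fac: "\<forall>i<N. \<forall>j<N. B i j = (\<Sum>a<N. U' a i * U' a j)"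
      and z: "\<forall>a i. a \<notin> P' \<longrightarrow> U' a i = 0" and tri: "\<forall>a i. a < i \<longrightarrow> U' a i = 0"
      and dg: "\<forall>a\<in>P'. U' a a \<noteq> 0" using H by simp_all
    define U where "U a i = (if a = N then u i else U' a i)" for a i
    have sumU: "(\<Sum>a<Suc N. U a i * U a j) = (\<Sum>a<N. U' a i * U' a j) + u i * u j" for i j
      by (simp add: U_def)
    have U'N: "(\<Sum>a<N. U' a N * U' a j) = 0" for j using tri by (intro sum.neutral) auto
    show ?thesis
    proof (intro exI conjI allI impI ballI)
      show "insert N P' \<subseteq> {..<Suc N}" using P' by auto
      fix i j assume i: "i < Suc N" and j: "j < Suc N"
      show "A i j = (\<Sum>a<Suc N. U a i * U a j)"
      proof (cases "i < N \<and> j < N")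
        case True
        then have "A i j - u i * u j = (\<Sum>a<N. U' a i * U' a j)" using fac unfolding B_def by auto
        then show ?thesis unfolding sumU by linarith
      next
        case False
        then have "i = N \<or> j = N" using i j by auto
        then show ?thesis
        proof
          assume iN: "i = N"
          have uN: "u N = s" using s by (simp add: u_def a0_def[symmetric]) (metis nonzero_mult_div_cancel_left less_irrefl)
          have "u N * u j = A j N" using s j uN by (simp add: u_def)
          moreover have "A j N = A N j" using sym j by (cases "j = N") auto
          ultimately show ?thesis unfolding sumU iN U'N by simp
        next
          assume jN: "j = N"
          have U'N': "(\<Sum>a<N. U' a i * U' a N) = 0" using tri by (intro sum.neutral) auto
          have uN: "u N = s" using s by (simp add: u_def a0_def[symmetric]) (metis nonzero_mult_div_cancel_left less_irrefl)
          have "u i * u N = A i N" using s i uN by (simp add: u_def)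
          then show ?thesis unfolding sumU jN U'N' by simp
        qed
      qed
    next
      fix a i assume "a \<notin> insert N P'" then show "U a i = 0" using z by (auto simp: U_def)
    next
      fix a i :: nat assume "a < i" then show "U a i = 0" using tri by (auto simp: U_def u_def)
    next
      fix a assume "a \<in> insert N P'"
      then show "U a a \<noteq> 0"
      proof
        assume "a = N" then show ?thesis using s True by (simp add: U_def u_def a0_def[symmetric])
      next
        assume "a \<in> P'" then have "a \<noteq> N" using P' by auto
        then show ?thesis using dg \<open>a \<in> P'\<close> by (simp add: U_def)
      qed
    qed
  next
    case False
    then have a00: "a0 = 0" using a0 by simp
    have col0: "A i N = 0" if "i < N" for i
    proof (rule ccontr)
      assume b: "A i N \<noteq> 0"
      define t where "t = - (A i i + 1) / (2 * A i N)"
      have "0 \<le> quadf (Suc N) A (\<lambda>k. if k < N then (if k = i then 1 else 0) else t)" using psd by blast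
      also have "\<dots> = A i i + 2 * t * A i N"
        unfolding quadf_ext using that sym a00 by (simp add: quadf_delta sdm2 a0_def)
      also have "\<dots> = -1" using b by (simp add: t_def field_simps)
      finally show False by simp
    qed
    have psdA: "\<forall>x. quadf N A x \<ge> 0"
    proof
      fix x
      have "quadf N A x = quadf (Suc N) A (\<lambda>k. if k < N then x k else 0)" unfolding quadf_ext by simp
      then show "quadf N A x \<ge> 0" using psd by simp
    qed
    have symA: "\<forall>i<N. \<forall>j<N. A i j = A j i" using sym by auto
    obtain U' P' where H: "P' \<subseteq> {..<N} \<and> (\<forall>i<N. \<forall>j<N. A i j = (\<Sum>a<N. U' a i * U' a j))
     \<and> (\<forall>a i. a \<notin> P' \<longrightarrow> U' a i = 0) \<and> (\<forall>a i. a < i \<longrightarrow> U' a i = 0) \<and> (\<forall>a\<in>P'. U' a a \<noteq> 0)"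
      using Suc.IH[OF symA psdA] by (elim exE) (rule that)
    have P': "P' \<subseteq> {..<N}" and fac: "\<forall>i<N. \<forall>j<N. A i j = (\<Sum>a<N. U' a i * U' a j)"
      and z: "\<forall>a i. a \<notin> P' \<longrightarrow> U' a i = 0" and tri: "\<forall>a i. a < i \<longrightarrow> U' a i = 0"
      and dg: "\<forall>a\<in>P'. U' a a \<noteq> 0" using H by simp_all
    have NP: "N \<notin> P'" using P' by auto
    have sumU: "(\<Sum>a<Suc N. U' a i * U' a j) = (\<Sum>a<N. U' a i * U' a j)" for i j
      using z NP by simp
    show ?thesis
    proof (intro exI[of _ U'] exI[of _ P'] conjI allI impI ballI)
      show "P' \<subseteq> {..<Suc N}" using P' by auto
      fix i j assume i: "i < Suc N" and j: "j < Suc N"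
      show "A i j = (\<Sum>a<Suc N. U' a i * U' a j)"
      proof (cases "i < N \<and> j < N")
        case True then show ?thesis using fac unfolding sumU by auto
      next
        case False
        then have "i = N \<or> j = N" using i j by auto
        moreover have "(\<Sum>a<N. U' a N * U' a j) = 0" using tri by (intro sum.neutral) auto
        moreover have "(\<Sum>a<N. U' a i * U' a N) = 0" using tri by (intro sum.neutral) auto
        moreover have "A N j = 0"
        proof (cases "j = N")
          case True then show ?thesis using a00 unfolding a0_def by simp
        next
          case False then have jN: "j < N" using j by simp
          have "A N j = A j N" using sym[rule_format, of N j] j by simp
          then show ?thesis using col0[OF jN] by simp
        qed
        moreover have "A i N = 0" using col0 i a00 unfolding a0_def by (cases "i = N") auto
        ultimately show ?thesis unfolding sumU by auto
      qed
    qed (use z tri dg in auto)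
  qed
qed




lemma cs_card:
  fixes f :: "'a \<Rightarrow> real" assumes "finite P"
  shows "(\<Sum>a\<in>P. f a)^2 \<le> real (card P) * (\<Sum>a\<in>P. (f a)^2)"
proof -
  define S1 where "S1 = (\<Sum>b\<in>P. f b)"
  define S2 where "S2 = (\<Sum>b\<in>P. (f b)^2)"
  have inner: "(\<Sum>b\<in>P. (f a - f b)^2) = real (card P) * (f a)^2 + S2 - 2 * f a * S1" for a
  proof -
    have "(\<Sum>b\<in>P. (f a - f b)^2) = (\<Sum>b\<in>P. (f a)^2 + (f b)^2 - 2 * f a * f b)"
      by (intro sum.cong refl) (simp add: power2_eq_square algebra_simps)
    also have "\<dots> = real (card P) * (f a)^2 + S2 - 2 * f a * S1"
      unfolding S1_def S2_def by (simp add: sum.distrib sum_subtractf sum_distrib_left mult.assoc)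
    finally show ?thesis .
  qed
  have "0 \<le> (\<Sum>a\<in>P. \<Sum>b\<in>P. (f a - f b)^2)" by (intro sum_nonneg) auto
  also have "\<dots> = (\<Sum>a\<in>P. real (card P) * (f a)^2 + S2 - 2 * f a * S1)" by (simp only: inner)
  also have "\<dots> = real (card P) * S2 + real (card P) * S2 - 2 * S1 * S1"
  proof -
    have "(\<Sum>a\<in>P. 2 * f a * S1) = 2 * S1 * S1" unfolding S1_def[symmetric]
      by (simp add: sum_distrib_right[symmetric] sum_distrib_left[symmetric] S1_def mult.commute mult.left_commute)
    moreover have "(\<Sum>a\<in>P. real (card P) * (f a)^2) = real (card P) * S2"
      by (simp add: S2_def sum_distrib_left)
    ultimately show ?thesis by (simp add: sum.distrib sum_subtractf)
  qed
  finally show ?thesis unfolding S1_def S2_def by (simp add: power2_eq_square)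
qed

lemma sum_sq_swap:
  fixes U :: "nat \<Rightarrow> nat \<Rightarrow> real"
  shows "(\<Sum>x<N. \<Sum>y<N. (\<Sum>a<N. U a x * U a y)^2) = (\<Sum>a<N. \<Sum>b<N. (\<Sum>x<N. U a x * U b x)^2)"
proof -
  have "(\<Sum>x<N. \<Sum>y<N. (\<Sum>a<N. U a x * U a y)^2)
      = (\<Sum>x<N. \<Sum>y<N. \<Sum>a<N. \<Sum>b<N. U a x * U b x * (U a y * U b y))"
    by (simp add: power2_eq_square sum_product algebra_simps)
  also have "\<dots> = (\<Sum>x<N. \<Sum>a<N. \<Sum>y<N. \<Sum>b<N. U a x * U b x * (U a y * U b y))"
    by (rule sum.cong[OF refl], rule sum.swap)
  also have "\<dots> = (\<Sum>x<N. \<Sum>a<N. \<Sum>b<N. \<Sum>y<N. U a x * U b x * (U a y * U b y))"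
    by (rule sum.cong[OF refl], rule sum.cong[OF refl], rule sum.swap)
  also have "\<dots> = (\<Sum>a<N. \<Sum>x<N. \<Sum>b<N. \<Sum>y<N. U a x * U b x * (U a y * U b y))"
    by (rule sum.swap)
  also have "\<dots> = (\<Sum>a<N. \<Sum>b<N. \<Sum>x<N. \<Sum>y<N. U a x * U b x * (U a y * U b y))"
    by (rule sum.cong[OF refl], rule sum.swap)
  also have "\<dots> = (\<Sum>a<N. \<Sum>b<N. (\<Sum>x<N. U a x * U b x)^2)"
    by (simp add: power2_eq_square sum_product algebra_simps)
  finally show ?thesis .
qed

lemma indep:
  fixes A U :: "nat \<Rightarrow> nat \<Rightarrow> real" and c :: "nat \<Rightarrow> real"
  assumes fac: "\<forall>i<N. \<forall>j<N. A i j = (\<Sum>a<N. U a i * U a j)"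
    and tri: "\<forall>a i. a < i \<longrightarrow> U a i = 0" and dg: "\<forall>a\<in>P. U a a \<noteq> 0" and P: "P \<subseteq> {..<N}"
    and cz: "\<forall>j. j \<notin> P \<longrightarrow> c j = 0"
    and ker: "\<forall>x<N. (\<Sum>j<N. A x j * c j) = 0"
  shows "c j = 0"
proof (rule ccontr)
  assume "c j \<noteq> 0"
  define p where "p = (LEAST j. c j \<noteq> 0)"
  have cp: "c p \<noteq> 0" unfolding p_def by (rule LeastI) fact
  have below: "c x = 0" if "x < p" for x using not_less_Least[OF that[unfolded p_def]] by simp
  have pP: "p \<in> P" using cp cz by auto
  have pN: "p < N" using pP P by auto
  have "0 = (\<Sum>x<N. c x * (\<Sum>j<N. A x j * c j))" using ker by simp
  also have "\<dots> = (\<Sum>x<N. \<Sum>j<N. \<Sum>a<N. c x * U a x * U a j * c j)"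
    using fac by (intro sum.cong refl) (simp add: sum_distrib_left sum_distrib_right algebra_simps)
  also have "\<dots> = (\<Sum>x<N. \<Sum>a<N. \<Sum>j<N. c x * U a x * U a j * c j)"
    by (rule sum.cong[OF refl], rule sum.swap)
  also have "\<dots> = (\<Sum>a<N. \<Sum>x<N. \<Sum>j<N. c x * U a x * U a j * c j)"
    by (rule sum.swap)
  also have "\<dots> = (\<Sum>a<N. (\<Sum>x<N. U a x * c x)^2)"
    by (simp add: power2_eq_square sum_product algebra_simps)
  finally have "(\<Sum>a<N. (\<Sum>x<N. U a x * c x)^2) = 0" by simp
  then have "(\<Sum>x<N. U p x * c x)^2 = 0" using pN
    by (subst (asm) sum_nonneg_eq_0_iff) auto
  moreover have "(\<Sum>x<N. U p x * c x) = U p p * c p"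
  proof -
    have "(\<Sum>x<N. U p x * c x) = U p p * c p + (\<Sum>x\<in>{..<N}-{p}. U p x * c x)"
      using pN by (subst sum.remove[of _ p]) auto
    also have "(\<Sum>x\<in>{..<N}-{p}. U p x * c x) = 0"
    proof (intro sum.neutral ballI)
      fix x assume "x \<in> {..<N} - {p}"
      then have "x < p \<or> p < x" by auto
      then show "U p x * c x = 0" using below tri by auto
    qed
    finally show ?thesis by simp
  qed
  ultimately show False using cp dg pP by simp
qed

lemma trace_ineq:
  fixes A U :: "nat \<Rightarrow> nat \<Rightarrow> real"
  assumes fac: "\<forall>i<N. \<forall>j<N. A i j = (\<Sum>a<N. U a i * U a j)"
    and z: "\<forall>a i. a \<notin> P \<longrightarrow> U a i = 0" and P: "P \<subseteq> {..<N}"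
  shows "(\<Sum>x<N. A x x)^2 \<le> real (card P) * (\<Sum>x<N. \<Sum>y<N. (A x y)^2)"
proof -
  define G where "G a b = (\<Sum>x<N. U a x * U b x)" for a b
  have finP: "finite P" using P finite_subset by blast
  have "(\<Sum>x<N. A x x) = (\<Sum>x<N. \<Sum>a<N. U a x * U a x)" using fac by simp
  also have "\<dots> = (\<Sum>a<N. G a a)" unfolding G_def by (rule sum.swap)
  also have "\<dots> = (\<Sum>a\<in>P. G a a)"
    using P z by (intro sum.mono_neutral_right) (auto simp: G_def)
  finally have tr: "(\<Sum>x<N. A x x) = (\<Sum>a\<in>P. G a a)" .
  have fr: "(\<Sum>x<N. \<Sum>y<N. (A x y)^2) = (\<Sum>a<N. \<Sum>b<N. (G a b)^2)"
  proof -
    have "(\<Sum>x<N. \<Sum>y<N. (A x y)^2) = (\<Sum>x<N. \<Sum>y<N. (\<Sum>a<N. U a x * U a y)^2)"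
      using fac by (intro sum.cong refl) auto
    then show ?thesis unfolding G_def by (rule trans[OF _ sum_sq_swap])
  qed
  have "(\<Sum>a\<in>P. (G a a)^2) \<le> (\<Sum>a<N. (G a a)^2)"
    using P by (intro sum_mono2) auto
  also have "\<dots> \<le> (\<Sum>a<N. \<Sum>b<N. (G a b)^2)"
  proof (intro sum_mono)
    fix a assume "a \<in> {..<N}"
    then show "(G a a)^2 \<le> (\<Sum>b<N. (G a b)^2)"
      by (intro member_le_sum[of a "{..<N}" "\<lambda>b. (G a b)^2", simplified]) auto
  qed
  finally have le: "(\<Sum>a\<in>P. (G a a)^2) \<le> (\<Sum>x<N. \<Sum>y<N. (A x y)^2)" using fr by simp
  have "(\<Sum>a\<in>P. G a a)^2 \<le> real (card P) * (\<Sum>a\<in>P. (G a a)^2)" by (rule cs_card[OF finP])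
  also have "\<dots> \<le> real (card P) * (\<Sum>x<N. \<Sum>y<N. (A x y)^2)"
    using le by (simp add: mult_left_mono)
  finally show ?thesis unfolding tr .
qed




definition chi :: "nat set \<Rightarrow> nat set \<Rightarrow> real" where
  "chi X Y = (-1) ^ (card X * card Y + card (X \<inter> Y))"

definition ind :: "nat set \<Rightarrow> nat \<Rightarrow> nat" where "ind A i = (if i \<in> A then 1 else 0)"

definition cc :: "nat set \<Rightarrow> nat set \<Rightarrow> nat \<Rightarrow> real" where
  "cc A B i = (-1) ^ (card A + ind A i + card B + ind B i)"

lemma card_mult_inter: "finite X \<Longrightarrow> card X * card A + card (X \<inter> A) = (\<Sum>i\<in>X. card A + ind A i)"
proof -
  assume fX: "finite X"
  have "card (X \<inter> A) = (\<Sum>i\<in>X. ind A i)"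
    using sum.inter_restrict[OF fX, of "\<lambda>_. 1::nat" A] by (simp add: ind_def)
  then show ?thesis by (simp add: sum.distrib)
qed

lemma chi_prod: "finite X \<Longrightarrow> chi X A * chi X B = (\<Prod>i\<in>X. cc A B i)"
proof -
  assume fX: "finite X"
  have "chi X A * chi X B = (-1) ^ ((card X * card A + card (X \<inter> A)) + (card X * card B + card (X \<inter> B)))"
    unfolding chi_def by (simp add: power_add)
  also have "\<dots> = (-1) ^ (\<Sum>i\<in>X. card A + ind A i + card B + ind B i)"
    unfolding card_mult_inter[OF fX] by (simp add: sum.distrib add.assoc)
  also have "\<dots> = (\<Prod>i\<in>X. cc A B i)" unfolding power_sum cc_def ..
  finally show ?thesis .
qed

definition CC :: "nat set \<Rightarrow> nat set \<Rightarrow> nat set \<Rightarrow> real" where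
  "CC S A B = (\<Sum>X\<in>Pow S. chi X A * chi X B)"

lemma CC_prod: "finite S \<Longrightarrow> CC S A B = (\<Prod>i\<in>S. cc A B i + 1)"
proof -
  assume fS: "finite S"
  have "CC S A B = (\<Sum>X\<in>Pow S. (\<Prod>i\<in>X. cc A B i) * (\<Prod>i\<in>S - X. 1))"
    unfolding CC_def by (intro sum.cong refl) (simp add: chi_prod finite_subset[OF _ fS])
  also have "\<dots> = (\<Prod>i\<in>S. cc A B i + 1)" by (rule prod_add[symmetric, OF fS])
  finally show ?thesis .
qed

lemma cc1: "cc A B i + 1 = (if even (card A + ind A i + card B + ind B i) then 2 else 0)"
  unfolding cc_def by simp

lemma CC_sym: "CC S A B = CC S B A"
  unfolding CC_def by (simp add: mult.commute)

lemma CC_nonneg: "finite S \<Longrightarrow> 0 \<le> CC S A B"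
  by (simp add: CC_prod cc1 prod_nonneg)

lemma CC_le: "finite S \<Longrightarrow> CC S A B \<le> 2 ^ card S"
proof -
  assume fS: "finite S"
  have "(\<Prod>i\<in>S. cc A B i + 1) \<le> (\<Prod>i\<in>S. 2)"
    by (intro prod_mono) (simp add: cc1)
  then show ?thesis using fS by (simp add: CC_prod)
qed

lemma CC_nz:
  assumes fS: "finite S" and A: "A \<subseteq> S" and B: "B \<subseteq> S" and nz: "CC S A B \<noteq> 0"
  shows "B = A \<or> B = S - A"
proof -
  have ev: "even (card A + ind A i + card B + ind B i)" if "i \<in> S" for i
  proof (rule ccontr)
    assume "\<not> ?thesis"
    then have "cc A B i + 1 = 0" by (simp add: cc1)
    then have "CC S A B = 0" using fS that by (simp add: CC_prod prod_zero_iff) blast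
    then show False using nz by simp
  qed
  show ?thesis
  proof (cases "B = A")
    case False
    then obtain i where "i \<in> A \<and> i \<notin> B \<or> i \<in> B \<and> i \<notin> A" by blast
    then have iS: "i \<in> S" and oddAB: "odd (card A + card B)"
      using ev[of i] A B by (auto simp: ind_def)
    have "\<forall>j\<in>S. (j \<in> B \<longleftrightarrow> j \<notin> A)"
    proof
      fix j assume "j \<in> S"
      then show "(j \<in> B \<longleftrightarrow> j \<notin> A)" using ev[of j] oddAB by (cases "j \<in> A"; cases "j \<in> B") (auto simp: ind_def)
    qed
    then show ?thesis using A B by blast
  qed simp
qed

lemma sumCC_le:
  fixes T :: "nat \<Rightarrow> nat set"
  assumes inj: "inj_on T {..<N}" and sub: "\<forall>x<N. T x \<subseteq> S" and fS: "finite S" and y: "y < N"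
  shows "(\<Sum>z<N. CC S (T y) (T z)) \<le> 2 * 2 ^ card S"
proof -
  define Z where "Z = {z. z < N \<and> CC S (T y) (T z) \<noteq> 0}"
  have ZN: "Z \<subseteq> {..<N}" unfolding Z_def by auto
  have "(\<Sum>z<N. CC S (T y) (T z)) = (\<Sum>z\<in>Z. CC S (T y) (T z))"
    using ZN by (intro sum.mono_neutral_right) (auto simp: Z_def)
  also have "\<dots> \<le> (\<Sum>z\<in>Z. 2 ^ card S)" by (intro sum_mono CC_le fS)
  also have "\<dots> = real (card Z) * 2 ^ card S" by simp
  also have "\<dots> \<le> 2 * 2 ^ card S"
  proof -
    have "Z \<subseteq> {y} \<union> {z. z < N \<and> T z = S - T y}"
    proof
      fix z assume "z \<in> Z"
      then have z: "z < N" "CC S (T y) (T z) \<noteq> 0" unfolding Z_def by auto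
      then have "T z = T y \<or> T z = S - T y" using CC_nz[OF fS] sub y by blast
      then show "z \<in> {y} \<union> {z. z < N \<and> T z = S - T y}"
        using inj z y by (auto simp: inj_on_def)
    qed
    moreover have W: "card {z. z < N \<and> T z = S - T y} \<le> Suc 0"
    proof -
      have fin: "finite {z. z < N \<and> T z = S - T y}" by simp
      show ?thesis using card_le_Suc0_iff_eq[OF fin] inj by (auto simp: inj_on_def)
    qed
    ultimately have "card Z \<le> card ({y} \<union> {z. z < N \<and> T z = S - T y})"
      by (intro card_mono) auto
    also have "\<dots> \<le> card {y} + card {z. z < N \<and> T z = S - T y}" by (rule card_Un_le)
    also have "\<dots> \<le> 2" using W by simp
    finally have "card Z \<le> 2" .
    then show ?thesis by simp
  qed
  finally show ?thesis .
qed

lemma Q_bound: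
  fixes T :: "nat \<Rightarrow> nat set" and g :: "nat \<Rightarrow> real"
  assumes inj: "inj_on T {..<N}" and sub: "\<forall>x<N. T x \<subseteq> S" and fS: "finite S"
  shows "(\<Sum>x<N. \<Sum>y<N. g x * chi (T x) (T y) * g y) \<le> sqrt (2 ^ (card S + 1)) * (\<Sum>x<N. (g x)^2)"
proof -
  define F where "F X = (\<Sum>y<N. chi X (T y) * g y)" for X
  define C where "C y z = CC S (T y) (T z)" for y z
  define lam where "lam = sqrt (2 ^ (card S + 1) :: real)"
  have lam: "lam > 0" "lam * lam = 2 ^ (card S + 1)" unfolding lam_def by auto
  have fP: "finite (Pow S)" using fS by simp
  have s1: "(\<Sum>X\<in>Pow S. (F X)^2) = (\<Sum>y<N. \<Sum>z<N. g y * g z * C y z)"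
  proof -
    have "(\<Sum>X\<in>Pow S. (F X)^2) = (\<Sum>X\<in>Pow S. \<Sum>y<N. \<Sum>z<N. g y * g z * (chi X (T y) * chi X (T z)))"
      unfolding F_def by (intro sum.cong refl) (simp add: power2_eq_square sum_product algebra_simps)
    also have "\<dots> = (\<Sum>y<N. \<Sum>X\<in>Pow S. \<Sum>z<N. g y * g z * (chi X (T y) * chi X (T z)))"
      by (rule sum.swap)
    also have "\<dots> = (\<Sum>y<N. \<Sum>z<N. \<Sum>X\<in>Pow S. g y * g z * (chi X (T y) * chi X (T z)))"
      by (rule sum.cong[OF refl], rule sum.swap)
    also have "\<dots> = (\<Sum>y<N. \<Sum>z<N. g y * g z * C y z)"
      unfolding C_def CC_def by (simp add: sum_distrib_left)
    finally show ?thesis .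
  qed
  have Cnn: "0 \<le> C y z" for y z unfolding C_def by (rule CC_nonneg[OF fS])
  have Csym: "C y z = C z y" for y z unfolding C_def by (rule CC_sym)
  have s2: "(\<Sum>y<N. \<Sum>z<N. g y * g z * C y z) \<le> (\<Sum>y<N. \<Sum>z<N. ((g y)^2/2 + (g z)^2/2) * C y z)"
  proof (intro sum_mono mult_right_mono Cnn)
    fix y z
    have "0 \<le> (g y - g z)^2" by simp
    then show "g y * g z \<le> (g y)^2/2 + (g z)^2/2" by (simp add: power2_eq_square algebra_simps)
  qed
  have s3: "(\<Sum>y<N. \<Sum>z<N. ((g y)^2/2 + (g z)^2/2) * C y z) = (\<Sum>y<N. (g y)^2 * (\<Sum>z<N. C y z))"
  proof -
    have "(\<Sum>y<N. \<Sum>z<N. ((g y)^2/2 + (g z)^2/2) * C y z)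
        = (\<Sum>y<N. \<Sum>z<N. (g y)^2/2 * C y z) + (\<Sum>y<N. \<Sum>z<N. (g z)^2/2 * C y z)"
      by (simp add: sum.distrib distrib_right)
    also have "(\<Sum>y<N. \<Sum>z<N. (g z)^2/2 * C y z) = (\<Sum>z<N. \<Sum>y<N. (g z)^2/2 * C z y)"
      by (subst sum.swap) (simp add: Csym)
    also have "(\<Sum>y<N. \<Sum>z<N. (g y)^2/2 * C y z) + (\<Sum>z<N. \<Sum>y<N. (g z)^2/2 * C z y)
        = (\<Sum>y<N. (g y)^2 * (\<Sum>z<N. C y z))"
    proof -
      have e: "(\<Sum>y<N. \<Sum>z<N. (g y)^2/2 * C y z) = (\<Sum>y<N. (g y)^2/2 * (\<Sum>z<N. C y z))"
        by (simp add: sum_distrib_left)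
      have "(\<Sum>y<N. (g y)^2/2 * (\<Sum>z<N. C y z)) + (\<Sum>y<N. (g y)^2/2 * (\<Sum>z<N. C y z))
         = (\<Sum>y<N. (g y)^2/2 * (\<Sum>z<N. C y z) + (g y)^2/2 * (\<Sum>z<N. C y z))"
        by (rule sum.distrib[symmetric])
      also have "\<dots> = (\<Sum>y<N. (g y)^2 * (\<Sum>z<N. C y z))" by (intro sum.cong refl) simp
      finally show ?thesis unfolding e .
    qed
    finally show ?thesis .
  qed
  have s4: "(\<Sum>y<N. (g y)^2 * (\<Sum>z<N. C y z)) \<le> (\<Sum>y<N. (g y)^2 * (2 * 2 ^ card S))"
    unfolding C_def by (intro sum_mono mult_left_mono sumCC_le[OF inj sub fS]) auto
  have bigF: "(\<Sum>X\<in>Pow S. (F X)^2) \<le> 2 ^ (card S + 1) * (\<Sum>y<N. (g y)^2)"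
    using s1 s2 s3 s4 by (simp add: sum_distrib_left sum_distrib_right mult.commute)
  have s5: "(\<Sum>x<N. (F (T x))^2) \<le> (\<Sum>X\<in>Pow S. (F X)^2)"
  proof -
    have "(\<Sum>x<N. (F (T x))^2) = (\<Sum>X\<in>T ` {..<N}. (F X)^2)"
      by (rule sum.reindex[OF inj, symmetric, unfolded comp_def])
    also have "\<dots> \<le> (\<Sum>X\<in>Pow S. (F X)^2)"
      using sub fP by (intro sum_mono2) auto
    finally show ?thesis .
  qed
  have "2 * (\<Sum>x<N. \<Sum>y<N. g x * chi (T x) (T y) * g y) = (\<Sum>x<N. 2 * g x * F (T x))"
    unfolding F_def by (simp add: sum_distrib_left mult.assoc)
  also have "\<dots> \<le> (\<Sum>x<N. lam * (g x)^2 + (F (T x))^2 / lam)"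
  proof (intro sum_mono)
    fix x
    have "0 \<le> (lam * g x - F (T x))^2 / lam" using lam by simp
    also have "(lam * g x - F (T x))^2 / lam = lam * (g x)^2 + (F (T x))^2 / lam - 2 * g x * F (T x)"
      using lam by (simp add: power2_eq_square field_simps)
    finally show "2 * g x * F (T x) \<le> lam * (g x)^2 + (F (T x))^2 / lam" by simp
  qed
  also have "\<dots> = lam * (\<Sum>x<N. (g x)^2) + (\<Sum>x<N. (F (T x))^2) / lam"
    by (simp add: sum.distrib sum_distrib_left sum_divide_distrib)
  also have "\<dots> \<le> lam * (\<Sum>x<N. (g x)^2) + (lam * lam * (\<Sum>y<N. (g y)^2)) / lam"
    using s5 bigF lam by (intro add_left_mono divide_right_mono) auto
  also have "\<dots> = 2 * (lam * (\<Sum>x<N. (g x)^2))" using lam(1) by (simp add: field_simps)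
  finally show ?thesis unfolding lam_def by simp
qed




lemma swap4:
  fixes f :: "nat \<Rightarrow> nat \<Rightarrow> nat \<Rightarrow> nat \<Rightarrow> real"
  shows "(\<Sum>x<N. \<Sum>y<N. \<Sum>a<N. \<Sum>b<N. f x y a b) = (\<Sum>a<N. \<Sum>b<N. \<Sum>x<N. \<Sum>y<N. f x y a b)"
proof -
  have "(\<Sum>x<N. \<Sum>y<N. \<Sum>a<N. \<Sum>b<N. f x y a b) = (\<Sum>x<N. \<Sum>a<N. \<Sum>y<N. \<Sum>b<N. f x y a b)"
    by (rule sum.cong[OF refl], rule sum.swap)
  also have "\<dots> = (\<Sum>x<N. \<Sum>a<N. \<Sum>b<N. \<Sum>y<N. f x y a b)"
    by (rule sum.cong[OF refl], rule sum.cong[OF refl], rule sum.swap)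
  also have "\<dots> = (\<Sum>a<N. \<Sum>x<N. \<Sum>b<N. \<Sum>y<N. f x y a b)"
    by (rule sum.swap)
  also have "\<dots> = (\<Sum>a<N. \<Sum>b<N. \<Sum>x<N. \<Sum>y<N. f x y a b)"
    by (rule sum.cong[OF refl], rule sum.swap)
  finally show ?thesis .
qed

lemma S_bound:
  fixes A U :: "nat \<Rightarrow> nat \<Rightarrow> real" and T :: "nat \<Rightarrow> nat set"
  assumes fac: "\<forall>i<N. \<forall>j<N. A i j = (\<Sum>a<N. U a i * U a j)"
    and diag: "\<forall>x<N. A x x = 1"
    and hz: "\<forall>x<N. \<forall>y<N. chi (T x) (T y) * (A x y)^2 = (A x y)^2"
    and inj: "inj_on T {..<N}" and sub: "\<forall>x<N. T x \<subseteq> S" and fS: "finite S"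
  shows "(\<Sum>x<N. \<Sum>y<N. (A x y)^2) \<le> sqrt (2 ^ (card S + 1)) * real N"
proof -
  define lam where "lam = sqrt (2 ^ (card S + 1) :: real)"
  have lam0: "lam \<ge> 0" unfolding lam_def by simp
  have "(\<Sum>x<N. \<Sum>y<N. (A x y)^2) = (\<Sum>x<N. \<Sum>y<N. chi (T x) (T y) * (A x y)^2)"
    using hz by (intro sum.cong refl) auto
  also have "\<dots> = (\<Sum>x<N. \<Sum>y<N. \<Sum>a<N. \<Sum>b<N.
       (U a x * U b x) * chi (T x) (T y) * (U a y * U b y))"
    using fac by (intro sum.cong refl)
      (simp add: power2_eq_square sum_product sum_distrib_left algebra_simps)
  also have "\<dots> = (\<Sum>a<N. \<Sum>b<N. \<Sum>x<N. \<Sum>y<N.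
       (U a x * U b x) * chi (T x) (T y) * (U a y * U b y))"
    by (rule swap4)
  also have "\<dots> \<le> (\<Sum>a<N. \<Sum>b<N. lam * (\<Sum>x<N. (U a x * U b x)^2))"
    unfolding lam_def
    by (intro sum_mono Q_bound[OF inj sub fS, of "\<lambda>x. U _ x * U _ x"])
  also have "\<dots> = lam * (\<Sum>x<N. \<Sum>a<N. \<Sum>b<N. (U a x)^2 * (U b x)^2)"
  proof -
    have "(\<Sum>a<N. \<Sum>b<N. \<Sum>x<N. (U a x * U b x)^2) = (\<Sum>a<N. \<Sum>x<N. \<Sum>b<N. (U a x)^2 * (U b x)^2)"
      by (rule sum.cong[OF refl], rule sum.swap[THEN trans]) (simp add: power_mult_distrib)
    also have "\<dots> = (\<Sum>x<N. \<Sum>a<N. \<Sum>b<N. (U a x)^2 * (U b x)^2)" by (rule sum.swap)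
    finally have e: "(\<Sum>a<N. \<Sum>b<N. \<Sum>x<N. (U a x * U b x)^2) = (\<Sum>x<N. \<Sum>a<N. \<Sum>b<N. (U a x)^2 * (U b x)^2)" .
    show ?thesis by (simp only: sum_distrib_left[symmetric] e)
  qed
  also have "\<dots> = lam * (\<Sum>x<N. (A x x)^2)"
    using fac by (simp add: power2_eq_square sum_product)
  also have "\<dots> = lam * real N" using diag by simp
  finally show ?thesis unfolding lam_def .
qed




lemma sqrt_side:
  fixes v :: real assumes "v > 1"
  shows "sqrt (2 - 2*v) + sqrt (2 + 2*v) < 2 * sqrt 2"
proof -
  define a where "a = sqrt (2*v - 2)"
  have a0: "a \<ge> 0" using assms unfolding a_def by simp
  have e: "sqrt (2 - 2*v) = - a" unfolding a_def by (simp add: real_sqrt_minus[symmetric])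
  have "sqrt (2 + 2*v) \<le> a + 2"
  proof (rule power2_le_imp_le)
    have "(sqrt (2 + 2*v))^2 = 2 + 2*v" using assms by simp
    also have "\<dots> = a^2 + 4" using assms unfolding a_def by simp
    also have "\<dots> \<le> (a + 2)^2" using a0 by (simp add: power2_eq_square algebra_simps)
    finally show "(sqrt (2 + 2*v))^2 \<le> (a + 2)^2" .
  qed (use a0 in simp)
  moreover have "2 < 2 * sqrt (2::real)"
    using real_sqrt_less_iff[of 1 2] by simp
  ultimately have "sqrt (2 + 2*v) - a < 2 * sqrt 2" by linarith
  then show ?thesis unfolding e by simp
qed

lemma sqrt_pair_lt:
  fixes v :: real assumes "v \<noteq> 0"
  shows "sqrt (2 - 2*v) + sqrt (2 + 2*v) < 2 * sqrt 2"
proof (cases "v > 1")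
  case True then show ?thesis by (rule sqrt_side)
next
  case F1: False
  show ?thesis
  proof (cases "v < -1")
    case True
    then have "sqrt (2 - 2*(-v)) + sqrt (2 + 2*(-v)) < 2 * sqrt 2" by (intro sqrt_side) simp
    then show ?thesis by (simp add: add.commute)
  next
    case False
    define a where "a = sqrt (2 - 2*v)"
    define b where "b = sqrt (2 + 2*v)"
    have a0: "a \<ge> 0" and b0: "b \<ge> 0" using F1 False unfolding a_def b_def by auto
    have a2: "a^2 = 2 - 2*v" and b2: "b^2 = 2 + 2*v" using F1 False unfolding a_def b_def by auto
    have "a \<noteq> b"
    proof
      assume "a = b" then have "a^2 = b^2" by simp
      then show False using a2 b2 assms by simp
    qed
    then have "0 < (a - b)^2" by simp
    then have "(a + b)^2 < (2 * sqrt 2)^2"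
      using a2 b2 by (simp add: power2_eq_square algebra_simps)
    then have "a + b < 2 * sqrt 2" by (rule power_less_imp_less_base) simp
    then show ?thesis unfolding a_def b_def .
  qed
qed

lemma sqrt_pair_le:
  fixes v :: real
  shows "sqrt (2 - 2*v) + sqrt (2 + 2*v) \<le> 2 * sqrt 2"
  using sqrt_pair_lt[of v] by (cases "v = 0") auto




lemma concat_map2_length:
  assumes "\<forall>x\<in>set xs. length (f x) = 2"
  shows "length (concat (map f xs)) = 2 * length xs"
  using assms by (induction xs) auto

lemma concat_map2_nth:
  assumes "\<forall>x\<in>set xs. length (f x) = 2" "r < 2 * length xs"
  shows "concat (map f xs) ! r = f (xs ! (r div 2)) ! (r mod 2)"
  using assms
proof (induction xs arbitrary: r)
  case Nil then show ?case by simp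
next
  case (Cons x xs)
  have lx: "length (f x) = 2" using Cons.prems by simp
  show ?case
  proof (cases "r < 2")
    case True
    then show ?thesis using lx by (auto simp: nth_append)
  next
    case False
    then obtain r' where r': "r = Suc (Suc r')" by (metis add_2_eq_Suc le_add_diff_inverse not_less)
    then have r: "r' < 2 * length xs" using Cons.prems by auto
    have "concat (map f (x # xs)) ! r = concat (map f xs) ! r'"
      using r' lx by (simp add: nth_append)
    also have "\<dots> = f (xs ! (r' div 2)) ! (r' mod 2)"
      using Cons.IH[OF _ r] Cons.prems by simp
    finally show ?thesis using r' by simp
  qed
qed

lemma pdelta:
  fixes f :: "nat \<Rightarrow> real"
  assumes "i < N" "j < N"
  shows "(\<Sum>b<N. ((if b = i then 1 else 0) + s * (if b = j then 1 else 0)) * f b) = f i + s * f j"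
proof -
  have e: "((if b = i then 1 else 0) + s * (if b = j then 1 else 0)) * f b
     = (if b = i then f b else 0) + (if b = j then s * f b else 0)" for b by (auto simp: algebra_simps)
  show ?thesis unfolding e sum.distrib using assms by simp
qed

lemma dsum:
  fixes W :: "nat \<Rightarrow> nat \<Rightarrow> real"
  assumes "i < N" "j < N"
  shows "(\<Sum>a<N. \<Sum>b<N. ((if a = i then 1 else 0) + s * (if a = j then 1 else 0)) / d *
            (((if b = i then 1 else 0) + s * (if b = j then 1 else 0)) / d) * W a b)
       = (W i i + s * W i j + s * W j i + s * s * W j j) / (d * d)"
proof -
  define p where "p a = ((if a = i then 1 else 0) + s * (if a = j then 1 else 0) :: real)" for a
  have "(\<Sum>a<N. \<Sum>b<N. p a / d * (p b / d) * W a b) = (\<Sum>a<N. p a * (\<Sum>b<N. p b * W a b)) / (d * d)"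
    by (simp add: sum_divide_distrib sum_distrib_left mult_ac)
  also have "\<dots> = (\<Sum>a<N. p a * (W a i + s * W a j)) / (d * d)"
    unfolding p_def using assms by (simp add: pdelta)
  also have "(\<Sum>a<N. p a * (W a i + s * W a j)) = (W i i + s * W i j) + s * (W j i + s * W j j)"
    unfolding p_def using pdelta[OF assms, of s "\<lambda>a. W a i + s * W a j"] by simp
  finally show ?thesis unfolding p_def by (simp add: algebra_simps)
qed

lemma sum_pairs: "(\<Sum>r<2 * (L::nat). h r) = (\<Sum>k<L. h (2 * k) + h (2 * k + 1))"
  by (induction L) (simp_all add: sum.distrib algebra_simps)

lemma sqrt_div_sq: "d > 0 \<Longrightarrow> sqrt (x / (d * d)) = sqrt x / d"
  by (simp add: real_sqrt_divide real_sqrt_mult)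

lemma game_obj:
  fixes vs :: "nat set list" and W :: "real mat"
  defines "N \<equiv> length vs" and "es \<equiv> graph_edges (length vs) (CL_adj vs)"
  assumes sym: "\<forall>i<N. \<forall>j<N. W $$ (i,j) = W $$ (j,i)" and dg: "\<forall>i<N. W $$ (i,i) = 1"
  shows "gamma_obj (CL_game vs) W = (\<Sum>k<length es.
     (sqrt (2 - 2 * W $$ (fst (es!k), snd (es!k))) + sqrt (2 + 2 * W $$ (fst (es!k), snd (es!k)))) / (4 * real (length es)))"
proof -
  define L where "L = length es"
  define d where "d = 4 * real L"
  define f where "f = (\<lambda>(i, j). [vec N (\<lambda>k. ((if k = i then 1 else 0) - (if k = j then 1 else 0)) / d),
         vec N (\<lambda>k. ((if k = i then 1 else 0) + (if k = j then 1 else 0)) / d)] :: real vec list)"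
  define rows where "rows = concat (map f es)"
  have G: "CL_game vs = mat_of_rows N rows"
    unfolding CL_game_def graph_game_def rows_def f_def d_def L_def es_def N_def Let_def by simp
  have len2: "\<forall>x\<in>set es. length (f x) = 2" unfolding f_def by auto
  have lrows: "length rows = 2 * L" unfolding rows_def L_def using concat_map2_length[OF len2] .
  have es_in: "fst (es!k) < snd (es!k) \<and> snd (es!k) < N" if "k < L" for k
  proof -
    have "es ! k \<in> set es" using that L_def by simp
    then show ?thesis unfolding es_def graph_edges_def N_def by auto
  qed
  define h where "h r = sqrt (\<Sum>j<N. \<Sum>k<N. mat_of_rows N rows $$ (r, j) * mat_of_rows N rows $$ (r, k) * W $$ (j, k))" for r
  have "gamma_obj (CL_game vs) W = (\<Sum>r<2 * L. h r)"
    unfolding gamma_obj_def G h_def using lrows by simp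
  also have "\<dots> = (\<Sum>k<L. h (2 * k) + h (2 * k + 1))" by (rule sum_pairs)
  also have "\<dots> = (\<Sum>k<L. (sqrt (2 - 2 * W $$ (fst (es!k), snd (es!k))) + sqrt (2 + 2 * W $$ (fst (es!k), snd (es!k)))) / d)"
  proof (intro sum.cong refl)
    fix k assume k: "k \<in> {..<L}"
    obtain i j where ij: "es ! k = (i, j)" by fastforce
    have ijN: "i < j" "j < N" using es_in[of k] k ij by auto
    have d0: "d > 0" using k unfolding d_def by auto
    have r0: "rows ! (2 * k) = f (es ! k) ! 0" and r1: "rows ! (2 * k + 1) = f (es ! k) ! 1"
      unfolding rows_def using concat_map2_nth[OF len2, of "2*k"] concat_map2_nth[OF len2, of "2*k+1"] k L_def
      by auto
    have e0: "mat_of_rows N rows $$ (2 * k, c) = ((if c = i then 1 else 0) + (-1) * (if c = j then 1 else 0)) / d"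
      if "c \<in> {..<N}" for c
      using that k lrows r0 ij by (simp add: mat_of_rows_index f_def)
    have e1: "mat_of_rows N rows $$ (2 * k + 1, c) = ((if c = i then 1 else 0) + 1 * (if c = j then 1 else 0)) / d"
      if "c \<in> {..<N}" for c
      using that k lrows r1 ij by (simp add: mat_of_rows_index f_def)
    have "h (2 * k) = sqrt ((W $$ (i,i) + (-1) * W $$ (i,j) + (-1) * W $$ (j,i) + (-1) * (-1) * W $$ (j,j)) / (d * d))"
    proof -
      have A: "(\<Sum>a<N. \<Sum>b<N. mat_of_rows N rows $$ (2 * k, a) * mat_of_rows N rows $$ (2 * k, b) * W $$ (a, b))
        = (\<Sum>a<N. \<Sum>b<N. ((if a = i then 1 else 0) + (-1) * (if a = j then 1 else 0)) / d *
            (((if b = i then 1 else 0) + (-1) * (if b = j then 1 else 0)) / d) * W $$ (a, b))"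
        by (intro sum.cong refl) (simp only: e0)
      show ?thesis unfolding h_def A by (subst dsum) (use ijN in auto)
    qed
    also have "\<dots> = sqrt (2 - 2 * W $$ (i,j)) / d"
      using sym dg ijN d0 by (simp add: sqrt_div_sq)
    finally have H0: "h (2 * k) = sqrt (2 - 2 * W $$ (i,j)) / d" .
    have "h (2 * k + 1) = sqrt ((W $$ (i,i) + 1 * W $$ (i,j) + 1 * W $$ (j,i) + 1 * 1 * W $$ (j,j)) / (d * d))"
    proof -
      have A: "(\<Sum>a<N. \<Sum>b<N. mat_of_rows N rows $$ (2 * k + 1, a) * mat_of_rows N rows $$ (2 * k + 1, b) * W $$ (a, b))
        = (\<Sum>a<N. \<Sum>b<N. ((if a = i then 1 else 0) + 1 * (if a = j then 1 else 0)) / d *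
            (((if b = i then 1 else 0) + 1 * (if b = j then 1 else 0)) / d) * W $$ (a, b))"
        by (intro sum.cong refl) (simp only: e1)
      show ?thesis unfolding h_def A by (subst dsum) (use ijN in auto)
    qed
    also have "\<dots> = sqrt (2 + 2 * W $$ (i,j)) / d"
      using sym dg ijN d0 by (simp add: sqrt_div_sq)
    finally have H1: "h (2 * k + 1) = sqrt (2 + 2 * W $$ (i,j)) / d" .
    show "h (2 * k) + h (2 * k + 1) = (sqrt (2 - 2 * W $$ (fst (es!k), snd (es!k))) + sqrt (2 + 2 * W $$ (fst (es!k), snd (es!k)))) / d"
      using H0 H1 ij by (simp add: add_divide_distrib)
  qed
  finally show ?thesis unfolding d_def L_def .
qed




lemma dim_col_CL: "dim_col (CL_game vs) = length vs"
  unfolding CL_game_def graph_game_def Let_def by simp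

lemma scalar_self_nonneg: "(x :: real vec) \<bullet> x \<ge> 0"
  unfolding scalar_prod_def by (intro sum_nonneg) simp

lemma one_feasible: "gamma_feasible (CL_game vs) (1\<^sub>m (length vs))"
  unfolding gamma_feasible_def psd_mat_def dim_col_CL
  by (auto simp: scalar_self_nonneg)

lemma opt_facts:
  fixes vs :: "nat set list" and V :: "real mat"
  defines "N \<equiv> length vs" and "es \<equiv> graph_edges (length vs) (CL_adj vs)"
  assumes opt: "gamma_optimal (CL_game vs) V"
  shows "V \<in> carrier_mat N N" and "\<forall>i<N. \<forall>j<N. V $$ (i,j) = V $$ (j,i)" and "\<forall>i<N. V $$ (i,i) = 1"
    and "\<forall>x. x \<in> carrier_vec N \<longrightarrow> x \<bullet> (V *\<^sub>v x) \<ge> 0"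
    and "\<forall>k<length es. V $$ (fst (es!k), snd (es!k)) = 0"
proof -
  have feas: "gamma_feasible (CL_game vs) V" using opt unfolding gamma_optimal_def by simp
  show C: "V \<in> carrier_mat N N" using feas unfolding gamma_feasible_def dim_col_CL N_def by simp
  have psd: "psd_mat V" using feas unfolding gamma_feasible_def by simp
  then have VT: "V\<^sup>T = V" unfolding psd_mat_def by simp
  show sym: "\<forall>i<N. \<forall>j<N. V $$ (i,j) = V $$ (j,i)"
  proof (intro allI impI)
    fix i j assume "i < N" "j < N"
    then have "V\<^sup>T $$ (i,j) = V $$ (j,i)" using C by simp
    then show "V $$ (i,j) = V $$ (j,i)" using VT by simp
  qed
  show dg: "\<forall>i<N. V $$ (i,i) = 1" using feas unfolding gamma_feasible_def dim_col_CL N_def by simp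
  show "\<forall>x. x \<in> carrier_vec N \<longrightarrow> x \<bullet> (V *\<^sub>v x) \<ge> 0"
    using psd C unfolding psd_mat_def by auto
  define L where "L = length es"
  define f where "f k = sqrt (2 - 2 * V $$ (fst (es!k), snd (es!k))) + sqrt (2 + 2 * V $$ (fst (es!k), snd (es!k)))" for k
  have objV: "gamma_obj (CL_game vs) V = (\<Sum>k<L. f k / (4 * real L))"
    using game_obj[of vs V] sym dg unfolding N_def es_def L_def f_def by simp
  have es_in: "fst (es!k) < snd (es!k) \<and> snd (es!k) < N" if "k < L" for k
  proof -
    have "es ! k \<in> set es" using that L_def by simp
    then show ?thesis unfolding es_def graph_edges_def N_def by auto
  qed
  have obj1: "gamma_obj (CL_game vs) (1\<^sub>m N) = (\<Sum>k<L. 2 * sqrt 2 / (4 * real L))"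
  proof -
    have "gamma_obj (CL_game vs) (1\<^sub>m N) = (\<Sum>k<L. (sqrt (2 - 2 * (1\<^sub>m N) $$ (fst (es!k), snd (es!k))) + sqrt (2 + 2 * (1\<^sub>m N) $$ (fst (es!k), snd (es!k)))) / (4 * real L))"
      using game_obj[of vs "1\<^sub>m N"] unfolding N_def es_def L_def by simp
    also have "\<dots> = (\<Sum>k<L. 2 * sqrt 2 / (4 * real L))"
    proof (intro sum.cong refl)
      fix k assume k: "k \<in> {..<L}"
      obtain i j where ij: "es ! k = (i, j)" by fastforce
      have "i < j" "j < N" using es_in[of k] k ij by auto
      then show "(sqrt (2 - 2 * (1\<^sub>m N) $$ (fst (es!k), snd (es!k))) + sqrt (2 + 2 * (1\<^sub>m N) $$ (fst (es!k), snd (es!k)))) / (4 * real L) = 2 * sqrt 2 / (4 * real L)"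
        using ij by simp
    qed
    finally show ?thesis .
  qed
  have "gamma_obj (CL_game vs) (1\<^sub>m N) \<le> gamma_obj (CL_game vs) V"
    using opt one_feasible[of vs] unfolding gamma_optimal_def N_def by blast
  then have ge: "(\<Sum>k<L. 2 * sqrt 2 / (4 * real L)) \<le> (\<Sum>k<L. f k / (4 * real L))"
    using obj1 objV by simp
  show "\<forall>k<length es. V $$ (fst (es!k), snd (es!k)) = 0"
  proof (rule ccontr)
    assume "\<not> ?thesis"
    then obtain k0 where k0: "k0 < L" "V $$ (fst (es!k0), snd (es!k0)) \<noteq> 0" unfolding L_def by auto
    have Lp: "(0::real) < 4 * real L" using k0 by simp
    have "(\<Sum>k<L. f k / (4 * real L)) < (\<Sum>k<L. 2 * sqrt 2 / (4 * real L))"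
    proof (rule sum_strict_mono_ex1)
      show "\<forall>k\<in>{..<L}. f k / (4 * real L) \<le> 2 * sqrt 2 / (4 * real L)"
      proof
        fix k
        have "f k \<le> 2 * sqrt 2" unfolding f_def by (rule sqrt_pair_le)
        then show "f k / (4 * real L) \<le> 2 * sqrt 2 / (4 * real L)" using Lp by (intro divide_right_mono) auto
      qed
      have "f k0 < 2 * sqrt 2" unfolding f_def by (rule sqrt_pair_lt) (use k0 in simp)
      then have "f k0 / (4 * real L) < 2 * sqrt 2 / (4 * real L)" using Lp by (intro divide_strict_right_mono) auto
      then show "\<exists>k\<in>{..<L}. f k / (4 * real L) < 2 * sqrt 2 / (4 * real L)" using k0 by blast
    qed simp
    then show False using ge by simp
  qed
qed




lemma rank_ge:
  fixes V :: "real mat" and U :: "nat \<Rightarrow> nat \<Rightarrow> real"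
  assumes C: "V \<in> carrier_mat N N"
    and fac: "\<forall>i<N. \<forall>j<N. V $$ (i,j) = (\<Sum>a<N. U a i * U a j)"
    and tri: "\<forall>a i. a < i \<longrightarrow> U a i = 0" and dg: "\<forall>a\<in>P. U a a \<noteq> 0" and P: "P \<subseteq> {..<N}"
  shows "card P \<le> mat_rank V"
proof -
  interpret vs: vec_space "TYPE(real)" N .
  have key: "c j = 0" if "\<forall>j. j \<notin> P \<longrightarrow> c j = 0" "\<forall>x<N. (\<Sum>j<N. V $$ (x,j) * c j) = 0" for c j
    using indep[of N "\<lambda>i j. V $$ (i,j)" U P c j] fac tri dg P that by blast
  have finP: "finite P" using P finite_subset by blast
  define ps where "ps = sorted_list_of_set P"
  have ps: "distinct ps" "set ps = P" using finP unfolding ps_def by auto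
  define B where "B = mat_of_cols N (map (col V) ps)"
  have colsV: "col V p \<in> carrier_vec N" for p using C col_dim[of V p] by auto
  have cB: "cols B = map (col V) ps" unfolding B_def using colsV by (intro cols_mat_of_cols) auto
  have injc: "inj_on (col V) P"
  proof
    fix p q assume p: "p \<in> P" and q: "q \<in> P" and eq: "col V p = col V q"
    show "p = q"
    proof (rule ccontr)
      assume pq: "p \<noteq> q"
      define c where "c j = (if j = p then 1 else if j = q then -1 else 0 :: real)" for j
      have "c p = 0"
      proof (rule key)
        show "\<forall>j. j \<notin> P \<longrightarrow> c j = 0" using p q unfolding c_def by auto
        show "\<forall>x<N. (\<Sum>j<N. V $$ (x,j) * c j) = 0"
        proof (intro allI impI)
          fix x assume x: "x < N"
          have pN: "p < N" and qN: "q < N" using p q P by auto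
          have "(\<Sum>j<N. V $$ (x,j) * c j) = (\<Sum>j<N. (if j = p then V $$ (x,j) else 0)) - (\<Sum>j<N. (if j = q then V $$ (x,j) else 0))"
          proof -
            have "V $$ (x,j) * c j = (if j = p then V $$ (x,j) else 0) - (if j = q then V $$ (x,j) else 0)" for j
              unfolding c_def using pq by auto
            then show ?thesis by (simp only: sum_subtractf)
          qed
          also have "\<dots> = V $$ (x,p) - V $$ (x,q)" using pN qN by simp
          also have "V $$ (x,p) = col V p $ x" using x C by (auto simp: col_def)
          also have "V $$ (x,q) = col V q $ x" using x C by (auto simp: col_def)
          finally show "(\<Sum>j<N. V $$ (x,j) * c j) = 0" using eq by simp
        qed
      qed
      then show False unfolding c_def by simp
    qed
  qed
  have dB: "distinct (cols B)" unfolding cB using ps injc by (simp add: distinct_map)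
  have BC: "B \<in> carrier_mat N (length ps)" unfolding B_def using mat_of_cols_carrier(1)[of N "map (col V) ps"] by simp
  have indp: "vs.lin_indpt (set (cols B))"
  proof
    assume ld: "vs.lin_dep (set (cols B))"
    obtain w where w: "w \<in> carrier_vec (length ps)" "w \<noteq> 0\<^sub>v (length ps)" "B *\<^sub>v w = 0\<^sub>v N"
      using vs.lin_depE[OF BC ld dB] by blast
    define c where "c j = (if j \<in> P then w $ (inv_into {..<length ps} (nth ps) j) else 0)" for j
    have cps: "c (ps ! k) = w $ k" if "k < length ps" for k
    proof -
      have "inv_into {..<length ps} (nth ps) (ps ! k) = k"
        using that ps(1) by (intro inv_into_f_f inj_on_nth) auto
      moreover have "ps ! k \<in> P" using that ps by auto
      ultimately show ?thesis unfolding c_def by simp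
    qed
    have "c j = 0" for j
    proof (rule key)
      show "\<forall>j. j \<notin> P \<longrightarrow> c j = 0" unfolding c_def by auto
      show "\<forall>x<N. (\<Sum>j<N. V $$ (x,j) * c j) = 0"
      proof (intro allI impI)
        fix x assume x: "x < N"
        have "0 = (B *\<^sub>v w) $ x" using w(3) x by simp
        also have "\<dots> = (\<Sum>k<length ps. V $$ (x, ps ! k) * w $ k)"
        proof -
          have e1: "(B *\<^sub>v w) $ x = (\<Sum>k\<in>{0..<length ps}. row B x $ k * w $ k)"
            using x BC w(1) by (simp add: scalar_prod_def)
          have e2: "row B x $ k = V $$ (x, ps!k)" if "k \<in> {0..<length ps}" for k
          proof -
            have k: "k < length ps" using that by simp
            have "row B x $ k = B $$ (x, k)" using x k BC by simp
            also have "\<dots> = col V (ps ! k) $ x" unfolding B_def using x k by (simp add: mat_of_cols_index)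
            also have "\<dots> = V $$ (x, ps!k)" using x C by (auto simp: col_def)
            finally show ?thesis .
          qed
          show ?thesis unfolding e1 atLeast0LessThan[symmetric] by (intro sum.cong refl) (simp add: e2)
        qed
        also have "\<dots> = (\<Sum>k<length ps. V $$ (x, ps ! k) * c (ps ! k))"
          using cps by simp
        also have "\<dots> = (\<Sum>j\<in>set ps. V $$ (x, j) * c j)"
          by (rule sum.reindex_bij_betw[OF bij_betw_nth[OF ps(1) refl refl], of "\<lambda>j. V $$ (x, j) * c j"])
        also have "\<dots> = (\<Sum>j<N. V $$ (x, j) * c j)"
          using ps P by (intro sum.mono_neutral_left) (auto simp: c_def)
        finally show "(\<Sum>j<N. V $$ (x,j) * c j) = 0" by simp
      qed
    qed
    then have "w = 0\<^sub>v (length ps)" using w(1) cps by (intro eq_vecI) auto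
    then show False using w(2) by simp
  qed
  have sub: "set (cols B) \<subseteq> set (cols V)"
  proof
    fix v assume "v \<in> set (cols B)"
    then obtain p where "p \<in> P" "v = col V p" unfolding cB using ps by auto
    then have "p < dim_col V" using P C by auto
    then show "v \<in> set (cols V)" using \<open>v = col V p\<close> unfolding cols_def by auto
  qed
  have "card (set (cols B)) \<le> vs.rank V" by (rule vs.rank_ge_card_indpt[OF C sub indp])
  moreover have "card (set (cols B)) = card P"
  proof -
    have "card (set (cols B)) = length (cols B)" by (rule distinct_card[OF dB])
    also have "\<dots> = length ps" unfolding cB by simp
    also have "\<dots> = card P" using distinct_card[OF ps(1)] ps(2) by simp
    finally show ?thesis .
  qed
  moreover have "mat_rank V = vs.rank V" unfolding mat_rank_def using C by simp
  ultimately show ?thesis by simp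
qed




lemma quad_step: "(m::nat) \<ge> 15 \<Longrightarrow> (m + 4)^2 \<le> 2 * m^2"
proof -
  assume m: "m \<ge> 15"
  have "15 * m \<le> m * m" using m by (intro mult_right_mono) auto
  then have "16 + m * 8 \<le> m * m" using m by linarith
  then show ?thesis by (simp add: power2_eq_square algebra_simps)
qed

lemma pow_bound: "n \<ge> 6 \<Longrightarrow> (4 * n - 9)^2 \<le> 4 * 2 ^ n"
proof (induction n rule: nat_induct_at_least)
  case base then show ?case by simp
next
  case (Suc n)
  have "4 * Suc n - 9 = (4 * n - 9) + 4" using Suc.hyps by simp
  then have "(4 * Suc n - 9)^2 \<le> 2 * (4 * n - 9)^2"
    using quad_step[of "4 * n - 9"] Suc.hyps by simp
  also have "\<dots> \<le> 2 * (4 * 2 ^ n)" using Suc.IH by simp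
  finally show ?case by simp
qed

lemma key_ineq: "n \<ge> 3 \<Longrightarrow> (4 * n - 9)^2 * 2 ^ (n + 1) < 9 * (2 ^ n - 1)^2"
proof -
  assume n: "n \<ge> 3"
  consider "n = 3" | "n = 4" | "n = 5" | "n \<ge> 6" using n by linarith
  then show ?thesis
  proof cases
    case 4
    define A :: nat where "A = 2 ^ n"
    have A64: "A \<ge> 64"
    proof -
      have "(2::nat) ^ 6 \<le> 2 ^ n" using 4 by (intro power_increasing) auto
      then show ?thesis unfolding A_def by simp
    qed
    have "(4 * n - 9)^2 * 2 ^ (n + 1) \<le> 4 * A * (2 * A)"
      using pow_bound[OF 4] unfolding A_def by (simp add: mult_right_mono)
    also have "\<dots> < 9 * (A - 1)^2"
    proof -
      obtain B where B: "A = B + 1" using A64 by (metis add.commute le_add_diff_inverse2 le_trans one_le_numeral)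
      have B63: "B \<ge> 63" using A64 B by simp
      have "63 * B \<le> B * B" using B63 by (intro mult_right_mono) auto
      then have "8 + B * 16 < B * B" using B63 by linarith
      then show ?thesis unfolding B by (simp add: power2_eq_square algebra_simps)
    qed
    finally show ?thesis unfolding A_def .
  qed simp_all
qed

lemma final_arith:
  fixes p n :: nat
  assumes n3: "n \<ge> 3" and h: "(2 ^ n - 1)^2 \<le> p^2 * 2 ^ (n + 1)"
  shows "4 * n - 8 \<le> 3 * p"
proof (rule ccontr)
  assume "\<not> ?thesis"
  then have "3 * p \<le> 4 * n - 9" by simp
  then have "(3 * p)^2 \<le> (4 * n - 9)^2" by (rule power_mono) simp
  then have "9 * p^2 * 2 ^ (n + 1) \<le> (4 * n - 9)^2 * 2 ^ (n + 1)"
    by (simp add: power_mult_distrib)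
  also have "\<dots> < 9 * (2 ^ n - 1)^2" by (rule key_ineq[OF n3])
  also have "\<dots> \<le> 9 * (p^2 * 2 ^ (n + 1))" using h by simp
  finally show False by simp
qed




lemma card_nonempty_subsets: "card {S. S \<subseteq> {1..n::nat} \<and> S \<noteq> {}} = 2 ^ n - 1"
proof -
  have "{S. S \<subseteq> {1..n::nat} \<and> S \<noteq> {}} = Pow {1..n} - {{}}" by auto
  then show ?thesis by (simp add: card_Pow)
qed

theorem proposition7p3:
  fixes n :: nat and vs :: "nat set list" and V :: "real mat"
  assumes "n \<ge> 3"
    and "distinct vs"
    and "set vs = {S. S \<subseteq> {1..n} \<and> S \<noteq> {}}"
    and "gamma_optimal (CL_game vs) V"
  shows "real (mat_rank V) \<ge> (4 * real n - 8) / 3"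
proof -
  note n3 = assms(1) and dist = assms(2) and setvs = assms(3) and opt = assms(4)
  define N where "N = length vs"
  define es where "es = graph_edges (length vs) (CL_adj vs)"
  define A where "A i j = V $$ (i, j)" for i j
  have C: "V \<in> carrier_mat N N" and sym: "\<forall>i<N. \<forall>j<N. V $$ (i,j) = V $$ (j,i)"
    and dg: "\<forall>i<N. V $$ (i,i) = 1" and psdv: "\<forall>x. x \<in> carrier_vec N \<longrightarrow> x \<bullet> (V *\<^sub>v x) \<ge> 0"
    and ez: "\<forall>k<length es. V $$ (fst (es!k), snd (es!k)) = 0"
    using opt_facts[OF opt] unfolding N_def es_def by auto
  have NN: "N = 2 ^ n - 1"
    unfolding N_def using distinct_card[OF dist] setvs card_nonempty_subsets[of n] by simp
  have symA: "\<forall>i<N. \<forall>j<N. A i j = A j i" using sym unfolding A_def by simp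
  have psdA: "\<forall>x. quadf N A x \<ge> 0"
  proof
    fix x :: "nat \<Rightarrow> real"
    define xv where "xv = vec N x"
    have xv: "xv \<in> carrier_vec N" unfolding xv_def by simp
    have "xv \<bullet> (V *\<^sub>v xv) = (\<Sum>i\<in>{0..<N}. x i * (\<Sum>j\<in>{0..<N}. V $$ (i,j) * x j))"
      using C unfolding xv_def by (simp add: scalar_prod_def row_def)
    also have "\<dots> = quadf N A x"
      unfolding quadf_def A_def atLeast0LessThan by (simp add: sum_distrib_left mult.assoc)
    finally show "quadf N A x \<ge> 0" using psdv xv by metis
  qed
  obtain U P where H: "P \<subseteq> {..<N} \<and> (\<forall>i<N. \<forall>j<N. A i j = (\<Sum>a<N. U a i * U a j))
     \<and> (\<forall>a i. a \<notin> P \<longrightarrow> U a i = 0) \<and> (\<forall>a i. a < i \<longrightarrow> U a i = 0) \<and> (\<forall>a\<in>P. U a a \<noteq> 0)"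
    using chol[OF symA psdA] by (elim exE) (rule that)
  have P: "P \<subseteq> {..<N}" and fac: "\<forall>i<N. \<forall>j<N. A i j = (\<Sum>a<N. U a i * U a j)"
    and z: "\<forall>a i. a \<notin> P \<longrightarrow> U a i = 0" and tri: "\<forall>a i. a < i \<longrightarrow> U a i = 0"
    and dgU: "\<forall>a\<in>P. U a a \<noteq> 0" using H by simp_all
  have rk: "card P \<le> mat_rank V"
    using rank_ge[OF C _ tri dgU P] fac unfolding A_def by blast
  
  have adj_sym: "CL_adj vs x y \<Longrightarrow> CL_adj vs y x" for x y
    unfolding CL_adj_def by (auto simp: Int_commute mult.commute)
  have edge0: "A x y = 0" if "x < y" "y < N" "CL_adj vs x y" for x y
  proof -
    have "(x, y) \<in> set es" using that unfolding es_def graph_edges_def N_def by auto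
    then obtain k where k: "k < length es" "es ! k = (x, y)" by (auto simp: in_set_conv_nth)
    then show ?thesis using ez unfolding A_def by force
  qed
  have adj0: "A x y = 0" if "x < N" "y < N" "CL_adj vs x y" for x y
  proof -
    have "x \<noteq> y" using that(3) unfolding CL_adj_def by auto
    then consider "x < y" | "y < x" by linarith
    then show ?thesis
    proof cases
      case 1 then show ?thesis using edge0 that by blast
    next
      case 2 then have "A y x = 0" using edge0 that adj_sym by blast
      then show ?thesis using symA that by simp
    qed
  qed
  define T where "T = (\<lambda>x. vs ! x)"
  have inj: "inj_on T {..<N}" unfolding T_def N_def by (intro inj_on_nth dist) auto
  have sub: "\<forall>x<N. T x \<subseteq> {1..n}"
  proof (intro allI impI)
    fix x assume "x < N"
    then have "vs ! x \<in> set vs" unfolding N_def by simp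
    then show "T x \<subseteq> {1..n}" unfolding T_def using setvs by auto
  qed
  have hz: "\<forall>x<N. \<forall>y<N. chi (T x) (T y) * (A x y)^2 = (A x y)^2"
  proof (intro allI impI)
    fix x y assume x: "x < N" and y: "y < N"
    show "chi (T x) (T y) * (A x y)^2 = (A x y)^2"
    proof (cases "CL_adj vs x y")
      case True then show ?thesis using adj0 x y by simp
    next
      case False
      have ev: "even (card (T x) * card (T y) + card (T x \<inter> T y))"
      proof (cases "x = y")
        case True then show ?thesis by simp
      next
        case False2: False
        then have "vs ! x \<noteq> vs ! y" using dist x y unfolding N_def by (simp add: nth_eq_iff_index_eq)
        then have "even (int (card (T x)) * int (card (T y)) - int (card (T x \<inter> T y)))"
          using False unfolding CL_adj_def T_def by simp
        then have "even (int (card (T x) * card (T y) + card (T x \<inter> T y)))" by simp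
        then show ?thesis by presburger
      qed
      then have "chi (T x) (T y) = 1" unfolding chi_def by simp
      then show ?thesis by simp
    qed
  qed
  have cardS: "card {1..n} = n" by simp
  have SB: "(\<Sum>x<N. \<Sum>y<N. (A x y)^2) \<le> sqrt (2 ^ (n + 1)) * real N"
    using S_bound[OF fac _ hz inj sub] dg cardS unfolding A_def by simp
  have TR: "(\<Sum>x<N. A x x)^2 \<le> real (card P) * (\<Sum>x<N. \<Sum>y<N. (A x y)^2)"
    by (rule trace_ineq[OF fac z P])
  have trN: "(\<Sum>x<N. A x x) = real N" using dg unfolding A_def by simp
  have Npos: "N > 0"
  proof -
    have "(2::nat) ^ 3 \<le> 2 ^ n" using n3 by (intro power_increasing) auto
    then show ?thesis unfolding NN by simp
  qed
  define p where "p = card P"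
  define lam where "lam = sqrt (2 ^ (n + 1) :: real)"
  have lam0: "lam \<ge> 0" and lam2: "lam * lam = 2 ^ (n + 1)" unfolding lam_def by auto
  have "real N * real N \<le> real p * (lam * real N)"
    using TR SB trN lam0 unfolding p_def lam_def
    by (metis (no_types, lifting) mult_left_mono of_nat_0_le_iff order_trans power2_eq_square)
  then have "real N \<le> real p * lam" using Npos by (simp add: mult.assoc[symmetric] mult_le_cancel_right)
  then have "real N * real N \<le> (real p * lam) * (real p * lam)"
    by (intro mult_mono) (use lam0 in auto)
  also have "\<dots> = real p * real p * (lam * lam)" by (simp add: algebra_simps)
  finally have "real N * real N \<le> real p * real p * 2 ^ (n + 1)" unfolding lam2 .
  then have "real ((2 ^ n - 1)^2) \<le> real (p^2 * 2 ^ (n + 1))"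
    unfolding NN by (simp add: power2_eq_square)
  then have "(2 ^ n - 1)^2 \<le> p^2 * 2 ^ (n + 1)" by (simp only: of_nat_le_iff)
  then have "4 * n - 8 \<le> 3 * p" by (rule final_arith[OF n3])
  then have "4 * n - 8 \<le> 3 * mat_rank V" using rk unfolding p_def by linarith
  then have "real (4 * n - 8) \<le> 3 * real (mat_rank V)" by linarith
  moreover have "real (4 * n - 8) = 4 * real n - 8" using n3 by simp
  ultimately show ?thesis by simp
qed


end
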